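(* Let $f$ be a continuous real-valued function defined on an interval $I$. Then $f$ is convex if and only if \[ \frac{1}{|J|}\int_J f(x)\,\mathrm{d}x\geq\frac{1}{|K|}\int_K f(x)\,\mathrm{d}x \] whenever $K\subset J$ are two compact subintervals of $I$ of positive length having the same midpoint. Here $|J|$, $|K|$ denote the lengths of the intervals. *)

theory Defs
  imports "HOL-Analysis.Analysis"
begin

end

theory Submission
  imports Defs "HOL-Analysis.Analysis"
begin

lemma avg_scale:
  fixes f :: "real \<Rightarrow> real"
  assumes "continuous_on {c-t..c+t} f" "t > 0"
  shows "integral {c-t..c+t} f = t * integral {-1..1} (\<lambda>x. f (t*x + c))"
proof -
  have "(f has_integral integral {c-t..c+t} f) (cbox (c-t) (c+t))"
    using integrable_continuous_interval[OF assms(1)] by (simp add: has_integral_integral)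
  from has_integral_affinity'[OF this assms(2), of c]
  have "((\<lambda>x. f (t*x + c)) has_integral (integral {c-t..c+t} f / t)) {-1..1}"
    using assms(2) by (simp add: divide_inverse mult.commute)
  then show ?thesis using assms(2) by (simp add: integral_unique)
qed

lemma avg_sym:
  fixes f :: "real \<Rightarrow> real"
  assumes "continuous_on {c-t..c+t} f" "t > 0"
  shows "integral {c-t..c+t} f / (2*t) = integral {-1..1} (\<lambda>x. f (c + t*x) + f (c - t*x)) / 4"
proof -
  have cont: "continuous_on {-1..1} (\<lambda>x. f (t*x + c))"
  proof (rule continuous_on_compose2[OF assms(1)])
    show "continuous_on {-1..1} (\<lambda>x. t*x + c)" by (intro continuous_intros)
    show "(\<lambda>x. t*x + c) ` {-1..1} \<subseteq> {c-t..c+t}"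
    proof
      fix y assume "y \<in> (\<lambda>x. t*x + c) ` {-1..1}"
      then obtain x where x: "\<bar>x\<bar> \<le> 1" "y = t*x + c" by (auto simp: abs_le_iff)
      have "\<bar>t*x\<bar> \<le> t" using x assms(2) by (simp add: abs_mult mult_left_le_one_le)
      then show "y \<in> {c-t..c+t}" using x by (auto simp: abs_le_iff)
    qed
  qed
  have cont2: "continuous_on {-1..1} (\<lambda>x. f (c - t*x))"
  proof (rule continuous_on_compose2[OF assms(1)])
    show "continuous_on {-1..1} (\<lambda>x. c - t*x)" by (intro continuous_intros)
    show "(\<lambda>x. c - t*x) ` {-1..1} \<subseteq> {c-t..c+t}"
    proof
      fix y assume "y \<in> (\<lambda>x. c - t*x) ` {-1..1}"
      then obtain x where x: "\<bar>x\<bar> \<le> 1" "y = c - t*x" by (auto simp: abs_le_iff)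
      have "\<bar>t*x\<bar> \<le> t" using x assms(2) by (simp add: abs_mult mult_left_le_one_le)
      then show "y \<in> {c-t..c+t}" using x by (auto simp: abs_le_iff)
    qed
  qed
  have r: "integral {-1..1} (\<lambda>x. f (c - t*x)) = integral {-1..1} (\<lambda>x. f (t*x + c))"
  proof -
    have e1: "integral {-1..- (-1)} (\<lambda>x. f (t * (-x) + c)) = integral {-1..1} (\<lambda>x. f (t*x + c))"
      using Henstock_Kurzweil_Integration.integral_reflect_real[of 1 "-1" "\<lambda>x. f (t*x + c)"] by (simp only:)
    have e2: "(\<lambda>x. f (t * (-x) + c)) = (\<lambda>x. f (c - t*x))" by (auto simp: algebra_simps)
    have e3: "- (-1::real) = 1" by simp
    show ?thesis using e1 unfolding e2 e3 .
  qed
  have "integral {-1..1} (\<lambda>x. f (c + t*x) + f (c - t*x)) =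
        integral {-1..1} (\<lambda>x. f (t*x + c)) + integral {-1..1} (\<lambda>x. f (c - t*x))"
    using integral_add[OF integrable_continuous_interval[OF cont] integrable_continuous_interval[OF cont2]]
    by (simp add: add.commute)
  then show ?thesis using avg_scale[OF assms] r assms(2) by simp
qed

lemma forward:
  fixes f :: "real \<Rightarrow> real"
  assumes cv: "convex_on I f" and co: "continuous_on I f"
    and s: "0 < s" "s \<le> r" and sub: "{c-r..c+r} \<subseteq> I"
  shows "integral {c - s..c + s} f / (2 * s) \<le> integral {c - r..c + r} f / (2 * r)"
proof -
  have r: "0 < r" using s by simp
  have cr: "continuous_on {c-r..c+r} f" using co sub by (rule continuous_on_subset)
  have "{c-s..c+s} \<subseteq> {c-r..c+r}" using s by auto
  then have cs: "continuous_on {c-s..c+s} f" by (rule continuous_on_subset[OF cr])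
  have ct: "continuous_on {-1..1} (\<lambda>x. f (c + t*x) + f (c - t*x))"
    if "continuous_on {c-t..c+t} f" "t > 0" for t
  proof -
    have im: "(\<lambda>x. c + t*x) ` {-1..1} \<subseteq> {c-t..c+t}" "(\<lambda>x. c - t*x) ` {-1..1} \<subseteq> {c-t..c+t}"
    proof -
      have "\<bar>t*x\<bar> \<le> t" if "x \<in> {-1..1}" for x
        using that \<open>t > 0\<close> by (simp add: abs_mult mult_left_le_one_le abs_le_iff)
      then show "(\<lambda>x. c + t*x) ` {-1..1} \<subseteq> {c-t..c+t}" "(\<lambda>x. c - t*x) ` {-1..1} \<subseteq> {c-t..c+t}"
        by (force simp: abs_le_iff)+
    qed
    show ?thesis
      by (intro continuous_on_add continuous_on_compose2[OF that(1) _ im(1)]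
          continuous_on_compose2[OF that(1) _ im(2)] continuous_intros)
  qed
  have pw: "f (c + s*x) + f (c - s*x) \<le> f (c + r*x) + f (c - r*x)" if x: "x \<in> {-1..1}" for x
  proof -
    define u where "u = (1 + s/r)/2"
    have u: "0 \<le> u" "u \<le> 1" using s r by (auto simp: u_def field_simps)
    have "\<bar>r*x\<bar> \<le> r" using x r by (simp add: abs_mult mult_left_le_one_le abs_le_iff)
    then have pq: "c + r*x \<in> I" "c - r*x \<in> I" using sub by (auto simp: abs_le_iff)
    have e1: "c + s*x = (1-u) *\<^sub>R (c - r*x) + u *\<^sub>R (c + r*x)"
      using r by (simp add: u_def field_simps)
    have e2: "c - s*x = (1-u) *\<^sub>R (c + r*x) + u *\<^sub>R (c - r*x)"
      using r by (simp add: u_def field_simps)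
    have "f (c + s*x) \<le> (1-u) * f (c - r*x) + u * f (c + r*x)"
      unfolding e1 by (rule convex_onD[OF cv u pq(2) pq(1)])
    moreover have "f (c - s*x) \<le> (1-u) * f (c + r*x) + u * f (c - r*x)"
      unfolding e2 by (rule convex_onD[OF cv u pq(1) pq(2)])
    ultimately show ?thesis by (simp add: algebra_simps)
  qed
  have "integral {-1..1} (\<lambda>x. f (c + s*x) + f (c - s*x)) \<le> integral {-1..1} (\<lambda>x. f (c + r*x) + f (c - r*x))"
    by (rule integral_le[OF integrable_continuous_interval[OF ct[OF cs s(1)]]
          integrable_continuous_interval[OF ct[OF cr r]] pw])
  then show ?thesis using avg_sym[OF cs s(1)] avg_sym[OF cr r] by simp
qed

lemma affine_int:
  fixes \<alpha> \<beta> c q :: real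
  assumes "0 \<le> q"
  shows "integral {c - q..c + q} (\<lambda>u. \<alpha> + \<beta>*u) = 2*q*(\<alpha> + \<beta>*c)"
proof -
  have "((\<lambda>u. \<alpha> + \<beta>*u) has_integral
     ((\<lambda>u. \<alpha>*u + \<beta>*u^2/2) (c+q) - (\<lambda>u. \<alpha>*u + \<beta>*u^2/2) (c-q))) {c-q..c+q}"
  proof (rule fundamental_theorem_of_calculus)
    show "c - q \<le> c + q" using assms by simp
    fix u :: real
    have "((\<lambda>u. \<alpha>*u + \<beta>*u^2/2) has_real_derivative (\<alpha> + \<beta>*u)) (at u within {c-q..c+q})"
      by (auto intro!: derivative_eq_intros)
    then show "((\<lambda>u. \<alpha>*u + \<beta>*u^2/2) has_vector_derivative (\<alpha> + \<beta>*u)) (at u within {c-q..c+q})"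
      by (simp add: has_real_derivative_iff_has_vector_derivative)
  qed
  then have "integral {c - q..c + q} (\<lambda>u. \<alpha> + \<beta>*u) =
     (\<lambda>u. \<alpha>*u + \<beta>*u^2/2) (c+q) - (\<lambda>u. \<alpha>*u + \<beta>*u^2/2) (c-q)" by (rule integral_unique)
  also have "\<dots> = 2*q*(\<alpha> + \<beta>*c)" by (simp add: power2_eq_square field_simps)
  finally show ?thesis .
qed

lemma core:
  fixes g :: "real \<Rightarrow> real"
  assumes xy: "x < y" and gc: "continuous_on {x..y} g" and gx: "g x = 0" and gy: "g y = 0"
    and z: "z \<in> {x..y}" "g z > 0"
  shows "\<exists>c r s. 0 < s \<and> s \<le> r \<and> {c-r..c+r} \<subseteq> {x..y} \<and>
           integral {c - r..c + r} g / (2 * r) < integral {c - s..c + s} g / (2 * s)"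
proof -
  obtain m where m: "m \<in> {x..y}" "\<forall>u\<in>{x..y}. g u \<le> g m"
    using continuous_attains_sup[OF compact_Icc _ gc] xy by auto
  define M where "M = g m"
  have Mpos: "M > 0" using m z unfolding M_def by force
  define S where "S = {u \<in> {x..y}. g u = M}"
  have "closed S" unfolding S_def by (rule continuous_closed_preimage_constant[OF gc closed_atLeastAtMost])
  moreover have "bounded S" by (rule bounded_subset[OF bounded_closed_interval]) (auto simp: S_def)
  ultimately have "compact S" by (simp add: compact_eq_bounded_closed)
  moreover have "S \<noteq> {}" using m by (auto simp: S_def M_def)
  ultimately obtain x0 where x0: "x0 \<in> S" "\<forall>u\<in>S. x0 \<le> u"
    using continuous_attains_inf[of S "\<lambda>u. u"] continuous_on_id by blast
  have gx0: "g x0 = M" "x \<le> x0" "x0 \<le> y" using x0 by (auto simp: S_def)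
  have x0i: "x < x0" "x0 < y" using gx0 gx gy Mpos by (auto simp: order.order_iff_strict)
  define \<delta> where "\<delta> = min (x0 - x) (y - x0)"
  have dpos: "\<delta> > 0" using x0i by (simp add: \<delta>_def)
  have Jsub: "{x0 - \<delta>..x0 + \<delta>} \<subseteq> {x..y}" by (auto simp: \<delta>_def)
  have gJ: "continuous_on {x0 - \<delta>..x0 + \<delta>} g" by (rule continuous_on_subset[OF gc Jsub])
  have leM: "g u \<le> M" if "u \<in> {x..y}" for u using m that by (simp add: M_def)
  have intJ: "integral {x0 - \<delta>..x0 + \<delta>} g < 2 * \<delta> * M"
  proof -
    define h where "h = (\<lambda>u. M - g u)"
    have hc: "continuous_on {x0 - \<delta>..x0 + \<delta>} h" unfolding h_def by (intro continuous_intros gJ)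
    have hnn: "\<And>u. u \<in> {x0 - \<delta>..x0 + \<delta>} \<Longrightarrow> 0 \<le> h u" using leM Jsub by (force simp: h_def)
    have hi: "integral {x0 - \<delta>..x0 + \<delta>} h = 2 * \<delta> * M - integral {x0 - \<delta>..x0 + \<delta>} g"
      unfolding h_def using dpos
      by (subst integral_diff) (auto intro: integrable_continuous_interval[OF gJ])
    have "integral {x0 - \<delta>..x0 + \<delta>} h \<ge> 0"
      by (rule integral_nonneg[OF integrable_continuous_interval[OF hc]]) (use hnn in auto)
    moreover have "integral {x0 - \<delta>..x0 + \<delta>} h \<noteq> 0"
    proof
      assume "integral {x0 - \<delta>..x0 + \<delta>} h = 0"
      then have "\<forall>u\<in>cbox (x0 - \<delta>) (x0 + \<delta>). h u = 0"
        using integral_cbox_eq_0_iff[of "x0 - \<delta>" "x0 + \<delta>" h] hc hnn dpos by auto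
      then have "g (x0 - \<delta>) = M" using dpos by (auto simp: h_def)
      then have "x0 - \<delta> \<in> S" using Jsub dpos by (auto simp: S_def)
      then show False using x0(2) dpos by force
    qed
    ultimately show ?thesis using hi by linarith
  qed
  define \<epsilon> where "\<epsilon> = M - integral {x0 - \<delta>..x0 + \<delta>} g / (2 * \<delta>)"
  have epos: "\<epsilon> > 0" using intJ dpos by (simp add: \<epsilon>_def field_simps)
  obtain d where d: "d > 0" "\<forall>u\<in>{x..y}. dist u x0 < d \<longrightarrow> dist (g u) (g x0) < \<epsilon>/2"
    using gc gx0 epos unfolding continuous_on_iff by (metis atLeastAtMost_iff half_gt_zero)
  define s where "s = min \<delta> (d/2)"
  have spos: "s > 0" "s \<le> \<delta>" using dpos d by (auto simp: s_def)
  have Ksub: "{x0 - s..x0 + s} \<subseteq> {x..y}" using Jsub spos by auto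
  have gK: "continuous_on {x0 - s..x0 + s} g" by (rule continuous_on_subset[OF gc Ksub])
  have big: "M - \<epsilon>/2 \<le> g u" if "u \<in> {x0 - s..x0 + s}" for u
  proof -
    have "dist u x0 < d" using that d spos by (auto simp: dist_real_def s_def abs_le_iff)
    then have "dist (g u) (g x0) < \<epsilon>/2" using d Ksub that by auto
    then have "\<bar>g u - M\<bar> < \<epsilon>/2" using gx0 by (simp add: dist_real_def)
    then show ?thesis by linarith
  qed
  have "integral {x0 - s..x0 + s} (\<lambda>u. M - \<epsilon>/2) \<le> integral {x0 - s..x0 + s} g"
    by (rule integral_le[OF _ integrable_continuous_interval[OF gK] big]) auto
  then have "2 * s * (M - \<epsilon>/2) \<le> integral {x0 - s..x0 + s} g" using spos by simp
  then have "M - \<epsilon>/2 \<le> integral {x0 - s..x0 + s} g / (2 * s)" using spos by (simp add: field_simps)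
  moreover have "integral {x0 - \<delta>..x0 + \<delta>} g / (2 * \<delta>) = M - \<epsilon>" by (simp add: \<epsilon>_def)
  ultimately have "integral {x0 - \<delta>..x0 + \<delta>} g / (2 * \<delta>) < integral {x0 - s..x0 + s} g / (2 * s)"
    using epos by linarith
  then show ?thesis using spos Jsub by blast
qed

lemma backward:
  fixes f :: "real \<Rightarrow> real" and I :: "real set"
  assumes iv: "is_interval I" and co: "continuous_on I f"
    and H: "\<forall>c r s. 0 < s \<and> s \<le> r \<and> {c - r..c + r} \<subseteq> I \<longrightarrow>
       integral {c - s..c + s} f / (2 * s) \<le> integral {c - r..c + r} f / (2 * r)"
  shows "convex_on I f"
proof (rule convex_on_linorderI)
  show "convex I" using iv by (rule is_interval_convex)
  fix t x y :: real assume t: "0 < t" "t < 1" and xI: "x \<in> I" and yI: "y \<in> I" and xy: "x < y"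
  show "f ((1 - t) *\<^sub>R x + t *\<^sub>R y) \<le> (1 - t) * f x + t * f y"
  proof (rule ccontr)
    assume viol: "\<not> ?thesis"
    have sub: "{x..y} \<subseteq> I"
    proof
      fix u assume "u \<in> {x..y}"
      then show "u \<in> I" using iv xI yI unfolding is_interval_1 by (meson atLeastAtMost_iff)
    qed
    define \<beta> where "\<beta> = (f y - f x) / (y - x)"
    define \<alpha> where "\<alpha> = f x - \<beta> * x"
    define g where "g = (\<lambda>u. f u - (\<alpha> + \<beta> * u))"
    define z where "z = (1 - t) * x + t * y"
    have z1: "0 \<le> t*(y-x)" "t*(y-x) \<le> y - x" using t xy
      by (auto intro: mult_left_le_one_le)
    have "z = x + t*(y-x)" by (simp add: z_def algebra_simps)
    then have zi: "z \<in> {x..y}" using z1 by auto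
    have gc: "continuous_on {x..y} g" unfolding g_def
      by (intro continuous_intros continuous_on_subset[OF co sub])
    have gx: "g x = 0" by (simp add: g_def \<alpha>_def)
    have b1: "\<beta>*(y-x) = f y - f x" using xy by (simp add: \<beta>_def)
    have "\<alpha> + \<beta>*y = f x + \<beta>*(y-x)" by (simp add: \<alpha>_def algebra_simps)
    then have gy: "g y = 0" using b1 by (simp add: g_def)
    have lin: "\<alpha> + \<beta> * z = (1 - t) * f x + t * f y"
    proof -
      have "\<alpha> + \<beta>*z = f x + t * (\<beta>*(y-x))" by (simp add: \<alpha>_def z_def algebra_simps)
      also have "\<dots> = f x + t*(f y - f x)" using b1 by simp
      also have "\<dots> = (1 - t) * f x + t * f y" by (simp add: algebra_simps)
      finally show ?thesis .
    qed
    have "f z > (1 - t) * f x + t * f y" using viol by (simp add: z_def)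
    then have gz: "g z > 0" using lin by (simp add: g_def)
    obtain c r s where crs: "0 < s" "s \<le> r" "{c-r..c+r} \<subseteq> {x..y}"
      and bad: "integral {c - r..c + r} g / (2 * r) < integral {c - s..c + s} g / (2 * s)"
      using core[OF xy gc gx gy zi gz] by blast
    have Hf: "integral {c - s..c + s} f / (2 * s) \<le> integral {c - r..c + r} f / (2 * r)"
    proof -
      have "{c-r..c+r} \<subseteq> I" using crs(3) sub by (rule order_trans)
      then show ?thesis using H crs(1,2) by simp
    qed
    have tr: "integral {c - q..c + q} g / (2 * q) = integral {c - q..c + q} f / (2 * q) - (\<alpha> + \<beta> * c)"
      if "0 < q" "q \<le> r" for q
    proof -
      have "{c - q..c + q} \<subseteq> {c-r..c+r}" using that by auto
      then have "{c - q..c + q} \<subseteq> I" using crs(3) sub by auto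
      then have fc: "continuous_on {c - q..c + q} f" by (rule continuous_on_subset[OF co])
      have "integral {c - q..c + q} g = integral {c - q..c + q} f - integral {c - q..c + q} (\<lambda>u. \<alpha> + \<beta>*u)"
        unfolding g_def
        by (rule integral_diff[OF integrable_continuous_interval[OF fc]
             integrable_continuous_interval]) (intro continuous_intros)
      also have "\<dots> = integral {c - q..c + q} f - 2*q*(\<alpha> + \<beta>*c)"
        using affine_int[of q] that by simp
      finally show ?thesis using that by (simp add: field_simps)
    qed
    have "0 < r" using crs by simp
    show False using tr[OF crs(1,2)] tr[OF \<open>0 < r\<close> order_refl] Hf bad by linarith
  qed
qed

theorem theorem3:
  fixes f :: "real \<Rightarrow> real" and I :: "real set"
  assumes "is_interval I" and "continuous_on I f"
  shows "convex_on I f \<longleftrightarrow>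
    (\<forall>c r s. 0 < s \<and> s \<le> r \<and> {c - r..c + r} \<subseteq> I \<longrightarrow>
       integral {c - s..c + s} f / (2 * s) \<le> integral {c - r..c + r} f / (2 * r))"
proof
  assume cv: "convex_on I f"
  show "\<forall>c r s. 0 < s \<and> s \<le> r \<and> {c - r..c + r} \<subseteq> I \<longrightarrow>
       integral {c - s..c + s} f / (2 * s) \<le> integral {c - r..c + r} f / (2 * r)"
    by (intro allI impI, elim conjE, rule forward[OF cv assms(2)])
qed (rule backward[OF assms])

end
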